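(* Let $\Gamma=F_r$ ($r\ge2$) be the free group, $Y$ its Gromov boundary with the natural $\Gamma$-action, $\{\Gamma_n\}$ a strictly decreasing sequence of finite-index normal subgroups of $\Gamma$ with $\bigcap_n\Gamma_n=\{e_\Gamma\}$, and $Z=\varprojlim\Gamma/\Gamma_n$ with the left translation action of $\Gamma$. Then the product action $\Gamma\curvearrowright Y\times Z$ is minimal.
   Context: $Y$ is the set of infinite reduced words $(x_n)_{n\in\mathbb N}$ in $S\cup S^{-1}$, $S$ a free generating set (i.e. $x_{n+1}\ne x_n^{-1}$), a closed subset of $(S\cup S^{-1})^{\mathbb N}$, with $\Gamma$ acting by concatenation and cancellation. $Z$ is the compact metrizable group of compatible sequences in $\prod_n\Gamma/\Gamma_n$, containing $\Gamma$ as a dense subgroup. *)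

theory Defs
  imports "HOL-Analysis.Analysis" "HOL-Algebra.Coset"
begin

text \<open>Letters of the free group on a generating set S: a letter (s, True) is the
generator s, a letter (s, False) is its inverse.\<close>

type_synonym 'a letter = "'a \<times> bool"

definition inv_letter :: "'a letter \<Rightarrow> 'a letter" where
  "inv_letter x = (fst x, \<not> snd x)"

fun reduced :: "'a letter list \<Rightarrow> bool" where
  "reduced [] = True"
| "reduced [x] = True"
| "reduced (x # y # zs) = (y \<noteq> inv_letter x \<and> reduced (y # zs))"

definition cons_red :: "'a letter \<Rightarrow> 'a letter list \<Rightarrow> 'a letter list" where
  "cons_red x ys = (case ys of [] \<Rightarrow> [x]
     | y # ys' \<Rightarrow> (if y = inv_letter x then ys' else x # ys))"

definition free_grp :: "'a set \<Rightarrow> 'a letter list monoid" where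
  "free_grp S = \<lparr> carrier = {w. set w \<subseteq> S \<times> UNIV \<and> reduced w},
                  mult = (\<lambda>u v. foldr cons_red u v),
                  one = [] \<rparr>"

text \<open>The Gromov boundary Y: infinite reduced words in the letters.\<close>
definition boundary :: "'a set \<Rightarrow> (nat \<Rightarrow> 'a letter) set" where
  "boundary S = {y. (\<forall>n. y n \<in> S \<times> UNIV) \<and> (\<forall>n. y (Suc n) \<noteq> inv_letter (y n))}"

definition boundary_top :: "'a set \<Rightarrow> (nat \<Rightarrow> 'a letter) topology" where
  "boundary_top S = subtopology (product_topology (\<lambda>_. discrete_topology (S \<times> UNIV)) UNIV)
                                (boundary S)"

definition cons_inf :: "'a letter \<Rightarrow> (nat \<Rightarrow> 'a letter) \<Rightarrow> (nat \<Rightarrow> 'a letter)" where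
  "cons_inf x y = (if y 0 = inv_letter x then (\<lambda>n. y (Suc n)) else case_nat x y)"

definition act_Y :: "'a letter list \<Rightarrow> (nat \<Rightarrow> 'a letter) \<Rightarrow> (nat \<Rightarrow> 'a letter)" where
  "act_Y g y = foldr cons_inf g y"

text \<open>Z = inverse limit of the finite quotients Gamma/Gamma_n: compatible sequences
of cosets, with the product of discrete topologies, and left translation by Gamma.\<close>
definition profinite :: "'a set \<Rightarrow> (nat \<Rightarrow> 'a letter list set) \<Rightarrow> (nat \<Rightarrow> 'a letter list set) set" where
  "profinite S Gs = {z. (\<forall>n. z n \<in> rcosets\<^bsub>free_grp S\<^esub> (Gs n)) \<and> (\<forall>n. z (Suc n) \<subseteq> z n)}"

definition profinite_top :: "'a set \<Rightarrow> (nat \<Rightarrow> 'a letter list set) \<Rightarrow> (nat \<Rightarrow> 'a letter list set) topology" where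
  "profinite_top S Gs = subtopology
     (product_topology (\<lambda>n. discrete_topology (rcosets\<^bsub>free_grp S\<^esub> (Gs n))) UNIV)
     (profinite S Gs)"

definition act_Z :: "'a set \<Rightarrow> 'a letter list \<Rightarrow> (nat \<Rightarrow> 'a letter list set) \<Rightarrow> (nat \<Rightarrow> 'a letter list set)" where
  "act_Z S g z = (\<lambda>n. g <#\<^bsub>free_grp S\<^esub> z n)"

definition minimal_action :: "'p topology \<Rightarrow> 'g set \<Rightarrow> ('g \<Rightarrow> 'p \<Rightarrow> 'p) \<Rightarrow> bool" where
  "minimal_action T G act \<longleftrightarrow>
     (\<forall>A. closedin T A \<and> (\<forall>g\<in>G. \<forall>p\<in>A. act g p \<in> A) \<longrightarrow> A = {} \<or> A = topspace T)"

end

theory Submission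
  imports Defs
begin


lemma inv_inv[simp]: "inv_letter (inv_letter x) = x"
  by (simp add: inv_letter_def)
lemma inv_neq[simp]: "inv_letter x \<noteq> x"
  by (cases x) (simp add: inv_letter_def)
lemma inv_neq2[simp]: "x \<noteq> inv_letter x"
  by (cases x) (simp add: inv_letter_def)
lemma inv_in: "x \<in> S \<times> UNIV \<Longrightarrow> inv_letter x \<in> S \<times> UNIV"
  by (cases x) (simp add: inv_letter_def)

lemma cons_inf_bd: "x \<in> S \<times> UNIV \<Longrightarrow> y \<in> boundary S \<Longrightarrow> cons_inf x y \<in> boundary S"
  unfolding boundary_def cons_inf_def
  by (auto split: nat.splits)

lemma actY_bd: "set w \<subseteq> S \<times> UNIV \<Longrightarrow> y \<in> boundary S \<Longrightarrow> act_Y w y \<in> boundary S"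
  by (induction w) (auto simp: act_Y_def intro!: cons_inf_bd)

lemma cancel: "y \<in> boundary S \<Longrightarrow> cons_inf x (cons_inf (inv_letter x) y) = y"
proof -
  assume y: "y \<in> boundary S"
  show ?thesis
  proof (cases "y 0 = x")
    case True
    have "y (Suc 0) \<noteq> inv_letter x" using y True by (auto simp: boundary_def)
    then show ?thesis using True
      by (auto simp: cons_inf_def fun_eq_iff split: nat.splits)
  next
    case False
    then show ?thesis by (auto simp: cons_inf_def fun_eq_iff)
  qed
qed

lemma cons_red_act: "x \<in> S \<times> UNIV \<Longrightarrow> set v \<subseteq> S \<times> UNIV \<Longrightarrow> y \<in> boundary S \<Longrightarrow>
   act_Y (cons_red x v) y = cons_inf x (act_Y v y)"
proof (cases v)
  case Nil
  then show ?thesis by (simp add: cons_red_def act_Y_def)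
next
  case (Cons a v')
  assume x: "x \<in> S \<times> UNIV" and v: "set v \<subseteq> S \<times> UNIV" and y: "y \<in> boundary S"
  show ?thesis
  proof (cases "a = inv_letter x")
    case True
    have "act_Y v' y \<in> boundary S" using v y Cons by (intro actY_bd) auto
    then show ?thesis using True Cons cancel[of "act_Y v' y" S x]
      by (simp add: cons_red_def act_Y_def)
  next
    case False
    then show ?thesis using Cons by (simp add: cons_red_def act_Y_def)
  qed
qed

lemma cons_red_set: "set (cons_red x v) \<subseteq> insert x (set v)"
  by (auto simp: cons_red_def split: list.splits if_splits)

lemma foldr_cons_red_set: "set u \<subseteq> L \<Longrightarrow> set v \<subseteq> L \<Longrightarrow> set (foldr cons_red u v) \<subseteq> L"
  by (induction u) (use cons_red_set in fastforce)+

lemma act_mult: "set u \<subseteq> S \<times> UNIV \<Longrightarrow> set v \<subseteq> S \<times> UNIV \<Longrightarrow> y \<in> boundary S \<Longrightarrow>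
   act_Y (foldr cons_red u v) y = act_Y u (act_Y v y)"
proof (induction u)
  case Nil
  then show ?case by (simp add: act_Y_def)
next
  case (Cons x u)
  have s: "set (foldr cons_red u v) \<subseteq> S \<times> UNIV" using Cons.prems by (intro foldr_cons_red_set) auto
  have "act_Y (foldr cons_red (x # u) v) y = act_Y (cons_red x (foldr cons_red u v)) y" by simp
  also have "\<dots> = cons_inf x (act_Y (foldr cons_red u v) y)"
    using Cons.prems s by (intro cons_red_act) auto
  also have "\<dots> = cons_inf x (act_Y u (act_Y v y))" using Cons by simp
  finally show ?case by (simp add: act_Y_def)
qed

lemma reduced_tl: "reduced (x # w) \<Longrightarrow> reduced w"
  by (cases w) auto

lemma act_prepend: "reduced w \<Longrightarrow> (w \<noteq> [] \<longrightarrow> y 0 \<noteq> inv_letter (last w)) \<Longrightarrow>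
   act_Y w y = (\<lambda>i. if i < length w then w ! i else y (i - length w))"
proof (induction w)
  case Nil
  then show ?case by (simp add: act_Y_def)
next
  case (Cons x w)
  have IH: "act_Y w y = (\<lambda>i. if i < length w then w ! i else y (i - length w))"
    using Cons.IH Cons.prems reduced_tl[of x w] by (cases w) auto
  have h0: "act_Y w y 0 \<noteq> inv_letter x"
  proof (cases w)
    case Nil then show ?thesis using Cons.prems IH by simp
  next
    case (Cons a w') then show ?thesis using Cons.prems(1) IH by auto
  qed
  have "act_Y (x # w) y = cons_inf x (act_Y w y)" by (simp add: act_Y_def)
  also have "\<dots> = case_nat x (act_Y w y)" using h0 by (simp add: cons_inf_def)
  finally show ?case using IH by (auto simp: fun_eq_iff nth_Cons split: nat.splits)
qed

lemma act_rep: "y 0 \<noteq> inv_letter l \<Longrightarrow>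
   act_Y (replicate m l) y = (\<lambda>i. if i < m then l else y (i - m))"
proof (induction m)
  case 0
  then show ?case by (simp add: act_Y_def)
next
  case (Suc m)
  have h0: "act_Y (replicate m l) y 0 \<noteq> inv_letter l" using Suc inv_neq[of l] by (cases m) (auto simp del: inv_neq)
  have "act_Y (replicate (Suc m) l) y = cons_inf l (act_Y (replicate m l) y)" by (simp add: act_Y_def)
  also have "\<dots> = case_nat l (act_Y (replicate m l) y)" using h0 by (simp add: cons_inf_def)
  finally show ?case using Suc by (auto simp: fun_eq_iff split: nat.splits)
qed



lemma fg_mult: "x \<otimes>\<^bsub>free_grp S\<^esub> y = foldr cons_red x y"
  by (simp add: free_grp_def)
lemma fg_carrier: "carrier (free_grp S) = {w. set w \<subseteq> S \<times> UNIV \<and> reduced w}"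
  by (simp add: free_grp_def)
lemma fg_one: "\<one>\<^bsub>free_grp S\<^esub> = []"
  by (simp add: free_grp_def)

lemma actG: "u \<in> carrier (free_grp S) \<Longrightarrow> v \<in> carrier (free_grp S) \<Longrightarrow> y \<in> boundary S \<Longrightarrow>
  act_Y (u \<otimes>\<^bsub>free_grp S\<^esub> v) y = act_Y u (act_Y v y)"
  using act_mult[of u S v y] by (simp add: fg_mult fg_carrier)

lemma actG_bd: "u \<in> carrier (free_grp S) \<Longrightarrow> y \<in> boundary S \<Longrightarrow> act_Y u y \<in> boundary S"
  by (simp add: fg_carrier actY_bd)

lemma reduced_nth: "reduced xs \<longleftrightarrow> (\<forall>i. Suc i < length xs \<longrightarrow> xs ! Suc i \<noteq> inv_letter (xs ! i))"
proof (induction xs rule: reduced.induct)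
  case (3 x y zs)
  show ?case
  proof
    assume "reduced (x # y # zs)"
    then show "\<forall>i. Suc i < length (x # y # zs) \<longrightarrow> (x # y # zs) ! Suc i \<noteq> inv_letter ((x # y # zs) ! i)"
      using 3 by (auto simp: nth_Cons split: nat.splits)
  next
    assume h: "\<forall>i. Suc i < length (x # y # zs) \<longrightarrow> (x # y # zs) ! Suc i \<noteq> inv_letter ((x # y # zs) ! i)"
    have "y \<noteq> inv_letter x" using h[rule_format, of 0] by simp
    moreover have "reduced (y # zs)" using 3 h by (metis Suc_less_eq length_Cons nth_Cons_Suc)
    ultimately show "reduced (x # y # zs)" by simp
  qed
qed auto

lemma word_carrier: "y \<in> boundary S \<Longrightarrow> map y [0..<M] \<in> carrier (free_grp S)"
  by (auto simp: fg_carrier reduced_nth boundary_def) (metis mem_Times_iff fst_conv)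

lemma rep_mult: "foldr cons_red (replicate n l) (replicate k l) = replicate (n + k) l"
proof (induction n)
  case (Suc n)
  show ?case using Suc inv_neq[of l]
    by (cases "n + k") (auto simp: cons_red_def simp del: inv_neq)
qed simp

lemma rep_pow: "[l] [^]\<^bsub>free_grp S\<^esub> n = replicate n l"
proof (induction n)
  case 0 then show ?case by (simp add: fg_one)
next
  case (Suc n)
  then show ?case using rep_mult[of n l 1] by (simp add: fg_mult)
qed

lemma rep_carrier: "l \<in> S \<times> UNIV \<Longrightarrow> replicate n l \<in> carrier (free_grp S)"
  by (auto simp: fg_carrier reduced_nth)

lemma power_in:
  assumes "group (free_grp S)" "subgroup H (free_grp S)" "finite (rcosets\<^bsub>free_grp S\<^esub> H)"
    and l: "l \<in> S \<times> UNIV"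
  shows "\<exists>m\<ge>1. replicate m l \<in> H"
proof -
  interpret group "free_grp S" by fact
  let ?G = "free_grp S"
  let ?R = "rcosets\<^bsub>?G\<^esub> H"
  have lc: "[l] \<in> carrier ?G" using rep_carrier[OF l, of 1] by simp
  define f where "f j = H #>\<^bsub>?G\<^esub> ([l] [^]\<^bsub>?G\<^esub> (j::nat))" for j
  have "f ` {0..card ?R} \<subseteq> ?R" using lc by (auto simp: f_def RCOSETS_def)
  then have "card (f ` {0..card ?R}) \<le> card ?R" using assms(3) by (simp add: card_mono)
  then have "\<not> inj_on f {0..card ?R}" by (intro pigeonhole) simp
  then obtain i j where ij: "i < j" "f i = f j"
    unfolding inj_on_def by (metis linorder_neqE_nat)
  have pj: "[l] [^]\<^bsub>?G\<^esub> j \<in> H #>\<^bsub>?G\<^esub> ([l] [^]\<^bsub>?G\<^esub> i)"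
    using ij lc assms(2) rcos_self[of "[l] [^]\<^bsub>?G\<^esub> j" H] by (simp add: f_def)
  then obtain h where h: "h \<in> H" "[l] [^]\<^bsub>?G\<^esub> j = h \<otimes>\<^bsub>?G\<^esub> ([l] [^]\<^bsub>?G\<^esub> i)"
    unfolding r_coset_def by auto
  have hc: "h \<in> carrier ?G" using h(1) assms(2) subgroup.subset by blast
  have "[l] [^]\<^bsub>?G\<^esub> (j - i) \<otimes>\<^bsub>?G\<^esub> ([l] [^]\<^bsub>?G\<^esub> i) = [l] [^]\<^bsub>?G\<^esub> j"
    using ij(1) lc by (simp add: nat_pow_mult)
  then have "[l] [^]\<^bsub>?G\<^esub> (j - i) = h" using h hc lc right_cancel by (metis nat_pow_closed)
  then show ?thesis using h(1) ij(1) by (intro exI[of _ "j - i"]) (simp add: rep_pow)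
qed



lemma normal_lr:
  fixes G (structure)
  assumes "normal K G" "g \<in> carrier G" "a \<in> carrier G"
  shows "g <#\<^bsub>G\<^esub> (K #>\<^bsub>G\<^esub> a) = K #>\<^bsub>G\<^esub> (g \<otimes>\<^bsub>G\<^esub> a)"
proof -
  interpret normal K G by fact
  have "g <#\<^bsub>G\<^esub> (K #>\<^bsub>G\<^esub> a) = g <#\<^bsub>G\<^esub> (a <#\<^bsub>G\<^esub> K)" using assms coset_eq by auto
  also have "\<dots> = (g \<otimes>\<^bsub>G\<^esub> a) <#\<^bsub>G\<^esub> K" using assms subset by (simp add: lcos_m_assoc)
  also have "\<dots> = K #>\<^bsub>G\<^esub> (g \<otimes>\<^bsub>G\<^esub> a)" using assms coset_eq by auto
  finally show ?thesis .
qed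

lemma prof_rep: "zz \<in> profinite S Gs \<Longrightarrow> \<exists>x\<in>carrier (free_grp S). zz n = Gs n #>\<^bsub>free_grp S\<^esub> x"
  unfolding profinite_def RCOSETS_def by auto

lemma three: "s1 \<noteq> s2 \<Longrightarrow> \<exists>l\<in>{(s1,True),(s1,False),(s2,True)}. l \<noteq> p \<and> l \<noteq> q"
  by (cases p; cases q) auto

lemma comb:
  assumes N: "\<And>n. Gs n \<lhd> free_grp S" "\<And>n. finite (rcosets\<^bsub>free_grp S\<^esub> (Gs n))"
    "\<And>n. Gs (Suc n) \<subseteq> Gs n"
  and Sx: "s1 \<in> S" "s2 \<in> S" "s1 \<noteq> s2"
  and pts: "y0 \<in> boundary S" "y \<in> boundary S" "z0 \<in> profinite S Gs" "z \<in> profinite S Gs"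
  shows "\<exists>g \<in> carrier (free_grp S). (\<forall>i<M. act_Y g y0 i = y i) \<and> (\<forall>i<M. act_Z S g z0 i = z i)"
proof -
  let ?G = "free_grp S"
  interpret group ?G by (rule normal.axioms(2)[OF N(1)[of 0]])
  have sg: "subgroup (Gs n) ?G" for n by (rule normal_imp_subgroup[OF N(1)])
  have Gmono: "i \<le> j \<Longrightarrow> Gs j \<subseteq> Gs i" for i j by (rule lift_Suc_antimono_le[of Gs, OF N(3)])
  have zmono: "i \<le> j \<Longrightarrow> zz j \<subseteq> zz i" if "zz \<in> profinite S Gs" for i j zz
  proof -
    have "zz (Suc n) \<subseteq> zz n" for n using that by (simp add: profinite_def)
    then show "i \<le> j \<Longrightarrow> zz j \<subseteq> zz i" by (rule lift_Suc_antimono_le[of zz])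
  qed
  let ?H = "Gs M"
  obtain a where a: "a \<in> carrier ?G" "z0 M = ?H #>\<^bsub>?G\<^esub> a"
    using prof_rep[OF pts(3), of M] by blast
  obtain b where b: "b \<in> carrier ?G" "z M = ?H #>\<^bsub>?G\<^esub> b"
    using prof_rep[OF pts(4), of M] by blast
  have zrep: "zz i = Gs i #>\<^bsub>?G\<^esub> x"
    if zzp: "zz \<in> profinite S Gs" "zz M = ?H #>\<^bsub>?G\<^esub> x" "x \<in> carrier ?G" "i < M" for zz i x
  proof -
    have "x \<in> zz M" using zzp(2) rcos_self[OF zzp(3) sg] by simp
    then have xi: "x \<in> zz i" using zmono[OF zzp(1), of i M] zzp(4) by auto
    obtain x' where x': "x' \<in> carrier ?G" "zz i = Gs i #>\<^bsub>?G\<^esub> x'"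
      using prof_rep[OF zzp(1), of i] by blast
    show ?thesis using repr_independence[of x "Gs i" x'] x' xi sg by simp
  qed
  define c where "c = b \<otimes>\<^bsub>?G\<^esub> inv\<^bsub>?G\<^esub> a"
  have cc: "c \<in> carrier ?G" using a b by (simp add: c_def)
  define y1 where "y1 = act_Y c y0"
  have y1: "y1 \<in> boundary S" unfolding y1_def by (rule actG_bd[OF cc pts(1)])
  define w where "w = map y [0..<M]"
  have wc: "w \<in> carrier ?G" unfolding w_def by (rule word_carrier[OF pts(2)])
  define iw where "iw = inv\<^bsub>?G\<^esub> w"
  have iwc: "iw \<in> carrier ?G" using wc iw_def by simp
  define y2 where "y2 = act_Y iw y1"
  have y2: "y2 \<in> boundary S" unfolding y2_def by (rule actG_bd[OF iwc y1])
  obtain l where l: "l \<in> S \<times> UNIV" "l \<noteq> inv_letter (y2 0)" "l \<noteq> inv_letter (last w)"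
  proof -
    have "\<exists>l\<in>{(s1,True),(s1,False),(s2,True)}. l \<noteq> inv_letter (y2 0) \<and> l \<noteq> inv_letter (last w)"
      using three[OF Sx(3)] by blast
    then show ?thesis using that Sx by auto
  qed
  obtain m where m: "m \<ge> 1" "replicate m l \<in> ?H"
    using power_in[of S ?H l] sg N(2) l(1) group_axioms by blast
  define r where "r = replicate m l"
  have rc: "r \<in> carrier ?G" using rep_carrier l(1) r_def by blast
  define k where "k = w \<otimes>\<^bsub>?G\<^esub> (r \<otimes>\<^bsub>?G\<^esub> iw)"
  have kH: "k \<in> ?H"
    using normal.inv_op_closed2[OF N(1)[of M] wc m(2)] wc rc iwc
    by (simp add: k_def iw_def r_def m_assoc)
  have kc: "k \<in> carrier ?G" using kH sg subgroup.subset by blast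
  define g where "g = k \<otimes>\<^bsub>?G\<^esub> c"
  have gc: "g \<in> carrier ?G" using kc cc g_def by simp
  have y2r: "y2 0 \<noteq> inv_letter l" 
  proof
    assume "y2 0 = inv_letter l"
    then have "inv_letter (y2 0) = l" by simp
    then show False using l(2) by simp
  qed
  define y3 where "y3 = act_Y r y2"
  have y30: "y3 0 = l" unfolding y3_def r_def act_rep[of y2 l m, OF y2r] using m(1) by simp
  have "act_Y g y0 = act_Y k y1" using actG[OF kc cc pts(1)] by (simp add: g_def y1_def)
  also have "\<dots> = act_Y w (act_Y (r \<otimes>\<^bsub>?G\<^esub> iw) y1)"
    unfolding k_def by (rule actG[OF wc _ y1]) (simp add: rc iwc)
  also have "\<dots> = act_Y w (act_Y r (act_Y iw y1))"
    using actG[OF rc iwc y1] by simp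
  also have "\<dots> = act_Y w y3" by (simp add: y2_def y3_def)
  also have "\<dots> = (\<lambda>i. if i < length w then w ! i else y3 (i - length w))"
  proof (rule act_prepend)
    show "reduced w" using wc by (simp add: fg_carrier)
    show "w \<noteq> [] \<longrightarrow> y3 0 \<noteq> inv_letter (last w)" using l(3) y30 by simp
  qed
  finally have Y: "\<forall>i<M. act_Y g y0 i = y i" by (simp add: w_def)
  have Z: "act_Z S g z0 i = z i" if i: "i < M" for i
  proof -
    have "act_Z S g z0 i = g <#\<^bsub>?G\<^esub> (Gs i #>\<^bsub>?G\<^esub> a)"
      using zrep[OF pts(3) a(2) a(1) i] by (simp add: act_Z_def)
    also have "\<dots> = Gs i #>\<^bsub>?G\<^esub> (g \<otimes>\<^bsub>?G\<^esub> a)" by (rule normal_lr[OF N(1) gc a(1)])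
    also have "g \<otimes>\<^bsub>?G\<^esub> a = k \<otimes>\<^bsub>?G\<^esub> b"
      using a(1) b(1) kc by (simp add: g_def c_def m_assoc)
    also have "Gs i #>\<^bsub>?G\<^esub> (k \<otimes>\<^bsub>?G\<^esub> b) = (Gs i #>\<^bsub>?G\<^esub> k) #>\<^bsub>?G\<^esub> b"
      using coset_mult_assoc[OF subgroup.subset[OF sg] kc b(1)] by simp
    also have "Gs i #>\<^bsub>?G\<^esub> k = Gs i"
      using coset_join2[OF kc sg] kH Gmono[of i M] i by auto
    also have "Gs i #>\<^bsub>?G\<^esub> b = z i" using zrep[OF pts(4) b(2) b(1) i] by simp
    finally show ?thesis .
  qed
  show ?thesis using gc Y Z by blast
qed



lemma nbhd:
  fixes X :: "nat \<Rightarrow> 'a topology"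
  assumes "openin (subtopology (product_topology X UNIV) B) U" "x \<in> U"
  shows "\<exists>N. \<forall>x' \<in> topspace (subtopology (product_topology X UNIV) B). (\<forall>i<N. x' i = x i) \<longrightarrow> x' \<in> U"
proof -
  obtain V where V: "openin (product_topology X UNIV) V" "U = V \<inter> B"
    using assms(1) by (auto simp: openin_subtopology)
  have "x \<in> V" using V assms(2) by blast
  then obtain W where W: "finite {i \<in> UNIV. W i \<noteq> topspace (X i)}" "x \<in> Pi\<^sub>E UNIV W" "Pi\<^sub>E UNIV W \<subseteq> V"
    using V(1) unfolding openin_product_topology_alt by blast
  obtain N where N: "{i \<in> UNIV. W i \<noteq> topspace (X i)} \<subseteq> {..<N}"
    using finite_nat_bounded[OF W(1)] by blast
  show ?thesis
  proof (intro exI ballI impI)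
    fix x' assume x': "x' \<in> topspace (subtopology (product_topology X UNIV) B)" "\<forall>i<N. x' i = x i"
    have "x' \<in> Pi\<^sub>E UNIV W"
    proof (rule PiE_I)
      fix i :: nat
      show "x' i \<in> W i"
      proof (cases "i < N")
        case True then show ?thesis using x'(2) W(2) by auto
      next
        case False
        then have "W i = topspace (X i)" using N by auto
        then show ?thesis using x'(1) by (auto simp: topspace_subtopology)
      qed
    qed auto
    then show "x' \<in> U" using W(3) V(2) x'(1) by (auto simp: topspace_subtopology)
  qed
qed

lemma two_elems: "finite S \<Longrightarrow> card S \<ge> 2 \<Longrightarrow> \<exists>s1 s2. s1 \<in> S \<and> s2 \<in> S \<and> s1 \<noteq> s2"
  using card_le_Suc0_iff_eq[of S] by force

theorem lemma5p1:
  fixes S :: "'a set" and Gs :: "nat \<Rightarrow> 'a letter list set"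
  assumes "finite S" and "card S \<ge> 2"
    and "\<And>n. Gs n \<lhd> free_grp S"
    and "\<And>n. finite (rcosets\<^bsub>free_grp S\<^esub> (Gs n))"
    and "\<And>n. Gs (Suc n) \<subset> Gs n"
    and "(\<Inter>n. Gs n) = {[]}"
  shows "minimal_action (prod_topology (boundary_top S) (profinite_top S Gs))
           (carrier (free_grp S))
           (\<lambda>g (y, z). (act_Y g y, act_Z S g z))"
proof -
  obtain s1 s2 where s: "s1 \<in> S" "s2 \<in> S" "s1 \<noteq> s2" using two_elems assms(1,2) by blast
  have Gsub: "Gs (Suc n) \<subseteq> Gs n" for n using assms(5) by auto
  let ?T = "prod_topology (boundary_top S) (profinite_top S Gs)"
  have tY: "topspace (boundary_top S) \<subseteq> boundary S" by (simp add: boundary_top_def topspace_subtopology)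
  have tZ: "topspace (profinite_top S Gs) \<subseteq> profinite S Gs" by (simp add: profinite_top_def topspace_subtopology)
  show ?thesis unfolding minimal_action_def
  proof (intro allI impI)
    fix A assume A: "closedin ?T A \<and> (\<forall>g\<in>carrier (free_grp S). \<forall>p\<in>A. (\<lambda>(y, z). (act_Y g y, act_Z S g z)) p \<in> A)"
    show "A = {} \<or> A = topspace ?T"
    proof (cases "A = {}")
      case False
      then obtain y0 z0 where p0: "(y0, z0) \<in> A" by auto
      have Asub: "A \<subseteq> topspace ?T" using A closedin_subset by blast
      have y0: "y0 \<in> boundary S" and z0: "z0 \<in> profinite S Gs" using p0 Asub tY tZ by auto
      have "topspace ?T \<subseteq> A"
      proof
        fix q assume q: "q \<in> topspace ?T"
        obtain y z where yz: "q = (y, z)" by fastforce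
        have y: "y \<in> boundary S" and z: "z \<in> profinite S Gs" using q yz tY tZ by auto
        have "q \<in> ?T closure_of A"
          unfolding in_closure_of
        proof (intro conjI allI impI)
          show "q \<in> topspace ?T" by fact
          fix W assume W: "q \<in> W \<and> openin ?T W"
          obtain U V where UV: "openin (boundary_top S) U" "openin (profinite_top S Gs) V"
            "y \<in> U" "z \<in> V" "U \<times> V \<subseteq> W"
            using W yz unfolding openin_prod_topology_alt by blast
          obtain N1 where N1: "\<forall>x' \<in> topspace (boundary_top S). (\<forall>i<N1. x' i = y i) \<longrightarrow> x' \<in> U"
            using nbhd[of _ "boundary S" U y] UV(1,3) unfolding boundary_top_def by blast
          obtain N2 where N2: "\<forall>x' \<in> topspace (profinite_top S Gs). (\<forall>i<N2. x' i = z i) \<longrightarrow> x' \<in> V"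
            using nbhd[of _ "profinite S Gs" V z] UV(2,4) unfolding profinite_top_def by blast
          obtain g where g: "g \<in> carrier (free_grp S)"
            "\<forall>i<max N1 N2. act_Y g y0 i = y i" "\<forall>i<max N1 N2. act_Z S g z0 i = z i"
            using comb[of Gs S s1 s2 y0 y z0 z "max N1 N2", OF assms(3,4) Gsub s y0 y z0 z] by blast
          have pA: "(act_Y g y0, act_Z S g z0) \<in> A" using A g(1) p0 by fastforce
          then have "act_Y g y0 \<in> topspace (boundary_top S)" "act_Z S g z0 \<in> topspace (profinite_top S Gs)"
            using Asub by auto
          then have "act_Y g y0 \<in> U" "act_Z S g z0 \<in> V" using N1 N2 g(2,3) by auto
          then show "\<exists>p. p \<in> A \<and> p \<in> W" using pA UV(5) by blast
        qed
        then show "q \<in> A" using closure_of_closedin A by blast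
      qed
      then show ?thesis using Asub by blast
    qed simp
  qed
qed

end
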